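(* Let $n>5$, let $G_R=(V,E_R)$ be an undirected (unweighted) connected graph of order $n$ such that $w^R_{xy}/w^R_{yx}\le c$ for every $(x,y)\in E_R$, and let $G_M=(V,E_M)$ be the clique of order $n$. If $r\ge 2c\left(1+\frac{2}{n-5}\right)$, then for every $S\subseteq V$ the absorption time $\tau$ of the two-graph Moran process with resident graph $G_R$ and mutant graph $G_M$ satisfies $$\mathbb{E}[\tau\mid X_0=S]\le\frac{r}{r-c}\,n\,(n-|S|).$$ In particular, $\mathbb{E}[\tau]\le\frac{r}{r-c}n^2$.
   Context: Two-graph Moran process: vertex set $V=\{1,\dots,n\}$; resident graph $G_R=(V,E_R)$ and mutant graph $G_M=(V,E_M)$ with row-stochastic weight matrices $W_R=[w^R_{ij}]$, $W_M=[w^M_{ij}]$ ($w^R_{ij}>0$ iff $(i,j)\in E_R$, similarly for $M$). The state $X_t$ at time $t$ is the mutant set; residents have fitness $1$, mutants fitness $r>0$. Each step a vertex $i$ is chosen with probability proportional to fitness; if $i$ is a mutant, it picks $j$ with probability $w^M_{ij}$ and $j$ becomes a mutant; if a resident, it picks $j$ with probability $w^R_{ij}$ and $j$ becomes a resident. The absorption time is $\tau=\min\{t: X_t\in\{\emptyset,V\}\}$. In $\mathbb{E}[\tau]$ (without conditioning), $X_0$ is a single mutant at a uniformly random vertex. Undirected graphs are unweighted: $w_{xy}=1/\deg(x)$ for neighbours $y$ of $x$, so $w^R_{xy}/w^R_{yx}=\deg(y)/\deg(x)$; for the clique $w^M_{xy}=1/(n-1)$. *)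

theory Defs
  imports "HOL-Analysis.Analysis"
begin

text \<open>Vertex set V = {..<n} (a relabelling of {1,...,n}). The resident graph is a
simple undirected graph given by a symmetric irreflexive relation E on V.\<close>

definition vset :: "nat \<Rightarrow> nat set" where
  "vset n = {..<n}"

definition undirected_graph_on :: "nat \<Rightarrow> (nat \<Rightarrow> nat \<Rightarrow> bool) \<Rightarrow> bool" where
  "undirected_graph_on n E \<longleftrightarrow>
     (\<forall>x y. E x y \<longrightarrow> x \<in> vset n \<and> y \<in> vset n) \<and>
     (\<forall>x y. E x y \<longrightarrow> E y x) \<and> (\<forall>x. \<not> E x x)"

definition connected_graph :: "nat \<Rightarrow> (nat \<Rightarrow> nat \<Rightarrow> bool) \<Rightarrow> bool" where
  "connected_graph n E \<longleftrightarrow> (\<forall>x\<in>vset n. \<forall>y\<in>vset n. E\<^sup>*\<^sup>* x y)"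

definition deg :: "nat \<Rightarrow> (nat \<Rightarrow> nat \<Rightarrow> bool) \<Rightarrow> nat \<Rightarrow> nat" where
  "deg n E x = card {y \<in> vset n. E x y}"

definition wR :: "nat \<Rightarrow> (nat \<Rightarrow> nat \<Rightarrow> bool) \<Rightarrow> nat \<Rightarrow> nat \<Rightarrow> real" where
  "wR n E x y = (if E x y then 1 / real (deg n E x) else 0)"

definition wM :: "nat \<Rightarrow> nat \<Rightarrow> nat \<Rightarrow> real" where
  "wM n x y = (if x \<noteq> y then 1 / (real n - 1) else 0)"

definition fitness :: "real \<Rightarrow> nat set \<Rightarrow> nat \<Rightarrow> real" where
  "fitness r S i = (if i \<in> S then r else 1)"

definition trans_prob ::
  "nat \<Rightarrow> (nat \<Rightarrow> nat \<Rightarrow> real) \<Rightarrow> (nat \<Rightarrow> nat \<Rightarrow> real) \<Rightarrow> real \<Rightarrow> nat set \<Rightarrow> nat set \<Rightarrow> real" where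
  "trans_prob n WR WM r S T =
     (\<Sum>i\<in>vset n. \<Sum>j\<in>vset n.
        fitness r S i / (\<Sum>k\<in>vset n. fitness r S k) *
        (if i \<in> S then WM i j else WR i j) *
        (if (if i \<in> S then insert j S else S - {j}) = T then 1 else 0))"

text \<open>Distribution of X_t given X_0 = S: state_dist ... S t T = P(X_t = T | X_0 = S).\<close>
primrec state_dist ::
  "nat \<Rightarrow> (nat \<Rightarrow> nat \<Rightarrow> real) \<Rightarrow> (nat \<Rightarrow> nat \<Rightarrow> real) \<Rightarrow> real \<Rightarrow> nat set \<Rightarrow> nat \<Rightarrow> nat set \<Rightarrow> real" where
  "state_dist n WR WM r S 0 T = (if T = S then 1 else 0)"
| "state_dist n WR WM r S (Suc t) T =
     (\<Sum>U\<in>Pow (vset n). state_dist n WR WM r S t U * trans_prob n WR WM r U T)"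

text \<open>E[tau | X_0 = S] = sum over t of P(tau > t) = sum over t of P(X_t \<notin> {\<emptyset>, V})
  (the states \<emptyset> and V are absorbing), as an extended nonnegative real.\<close>
definition exp_abs_time ::
  "nat \<Rightarrow> (nat \<Rightarrow> nat \<Rightarrow> real) \<Rightarrow> (nat \<Rightarrow> nat \<Rightarrow> real) \<Rightarrow> real \<Rightarrow> nat set \<Rightarrow> ennreal" where
  "exp_abs_time n WR WM r S =
     (\<Sum>t. ennreal (\<Sum>T\<in>Pow (vset n) - {{}, vset n}. state_dist n WR WM r S t T))"

text \<open>Unconditioned E[tau]: X_0 a single mutant at a uniformly random vertex.\<close>
definition exp_abs_time_uniform ::
  "nat \<Rightarrow> (nat \<Rightarrow> nat \<Rightarrow> real) \<Rightarrow> (nat \<Rightarrow> nat \<Rightarrow> real) \<Rightarrow> real \<Rightarrow> ennreal" where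
  "exp_abs_time_uniform n WR WM r =
     (\<Sum>v\<in>vset n. exp_abs_time n WR WM r {v}) / ennreal (real n)"

end

theory Submission
  imports Defs
begin


definition Ftot :: "nat \<Rightarrow> real \<Rightarrow> nat set \<Rightarrow> real" where
  "Ftot n r U = (\<Sum>k\<in>vset n. fitness r U k)"

definition stp :: "nat set \<Rightarrow> nat \<Rightarrow> nat \<Rightarrow> nat set" where
  "stp U i j = (if i \<in> U then insert j U else U - {j})"

definition Exv :: "nat \<Rightarrow> (nat \<Rightarrow> nat \<Rightarrow> real) \<Rightarrow> (nat \<Rightarrow> nat \<Rightarrow> real) \<Rightarrow> real \<Rightarrow> nat set \<Rightarrow> (nat set \<Rightarrow> real) \<Rightarrow> real" where
  "Exv n WR WM r U g = (\<Sum>i\<in>vset n. \<Sum>j\<in>vset n.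
     fitness r U i / Ftot n r U * (if i \<in> U then WM i j else WR i j) * g (stp U i j))"

lemma fin_vset[simp]: "finite (vset n)" by (simp add: vset_def)

lemma trans_sum:
  assumes "U \<subseteq> vset n"
  shows "(\<Sum>T\<in>Pow (vset n). trans_prob n WR WM r U T * g T) = Exv n WR WM r U g"
proof -
  have "(\<Sum>T\<in>Pow (vset n). trans_prob n WR WM r U T * g T)
     = (\<Sum>T\<in>Pow (vset n). \<Sum>i\<in>vset n. \<Sum>j\<in>vset n.
        fitness r U i / Ftot n r U * (if i \<in> U then WM i j else WR i j) *
        (if stp U i j = T then g T else 0))"
    unfolding trans_prob_def sum_distrib_right
    by (intro sum.cong refl) (auto simp: stp_def Ftot_def)
  also have "\<dots> = (\<Sum>i\<in>vset n. \<Sum>j\<in>vset n. \<Sum>T\<in>Pow (vset n).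
        fitness r U i / Ftot n r U * (if i \<in> U then WM i j else WR i j) *
        (if stp U i j = T then g T else 0))"
    by (subst sum.swap, rule sum.cong, simp, rule sum.swap)
  also have "\<dots> = Exv n WR WM r U g"
    unfolding Exv_def
  proof (intro sum.cong refl)
    fix i j assume "j \<in> vset n"
    then have "stp U i j \<in> Pow (vset n)" using assms by (auto simp: stp_def)
    then show "(\<Sum>T\<in>Pow (vset n).
        fitness r U i / Ftot n r U * (if i \<in> U then WM i j else WR i j) *
        (if stp U i j = T then g T else 0)) =
        fitness r U i / Ftot n r U * (if i \<in> U then WM i j else WR i j) * g (stp U i j)"
      by (simp only: sum_distrib_left[symmetric]) simp
  qed
  finally show ?thesis .
qed

lemma sd_step:
  "(\<Sum>T\<in>Pow (vset n). state_dist n WR WM r S (Suc t) T * g T)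
   = (\<Sum>U\<in>Pow (vset n). state_dist n WR WM r S t U * Exv n WR WM r U g)"
proof -
  have "(\<Sum>T\<in>Pow (vset n). state_dist n WR WM r S (Suc t) T * g T)
    = (\<Sum>T\<in>Pow (vset n). \<Sum>U\<in>Pow (vset n). state_dist n WR WM r S t U * (trans_prob n WR WM r U T * g T))"
    by (intro sum.cong refl) (simp add: sum_distrib_right sum_distrib_left mult_ac)
  also have "\<dots> = (\<Sum>U\<in>Pow (vset n). state_dist n WR WM r S t U * (\<Sum>T\<in>Pow (vset n). trans_prob n WR WM r U T * g T))"
    by (subst sum.swap) (simp add: sum_distrib_left)
  also have "\<dots> = (\<Sum>U\<in>Pow (vset n). state_dist n WR WM r S t U * Exv n WR WM r U g)"
    by (rule sum.cong) (auto simp: trans_sum)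
  finally show ?thesis .
qed

lemma trans_nonneg:
  assumes "r > 0" "\<And>i j. WR i j \<ge> 0" "\<And>i j. WM i j \<ge> 0"
  shows "trans_prob n WR WM r U T \<ge> 0"
  unfolding trans_prob_def using assms
  by (intro sum_nonneg) (auto simp: fitness_def intro!: mult_nonneg_nonneg divide_nonneg_nonneg sum_nonneg)

lemma sd_nonneg:
  assumes "r > 0" "\<And>i j. WR i j \<ge> 0" "\<And>i j. WM i j \<ge> 0"
  shows "state_dist n WR WM r S t T \<ge> 0"
  by (induction t arbitrary: T) (auto intro!: sum_nonneg mult_nonneg_nonneg trans_nonneg assms)

definition Abs :: "nat \<Rightarrow> (nat \<Rightarrow> nat \<Rightarrow> real) \<Rightarrow> (nat \<Rightarrow> nat \<Rightarrow> real) \<Rightarrow> real \<Rightarrow> nat set \<Rightarrow> nat \<Rightarrow> real" where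
  "Abs n WR WM r S t = (\<Sum>T\<in>Pow (vset n) - {{}, vset n}. state_dist n WR WM r S t T)"

lemma telescope:
  assumes sdnn: "\<And>t T. state_dist n WR WM r S t T \<ge> 0"
    and phinn: "\<And>T. T \<in> Pow (vset n) \<Longrightarrow> phi T \<ge> 0"
    and drift: "\<And>U. U \<in> Pow (vset n) \<Longrightarrow>
        Exv n WR WM r U phi \<le> phi U - d * (if U \<in> Pow (vset n) - {{}, vset n} then 1 else 0)"
    and S: "S \<subseteq> vset n"
  shows "d * (\<Sum>t<N. Abs n WR WM r S t) \<le> phi S"
proof -
  define Phi where "Phi t = (\<Sum>T\<in>Pow (vset n). state_dist n WR WM r S t T * phi T)" for t
  have A: "Abs n WR WM r S t = (\<Sum>U\<in>Pow (vset n). state_dist n WR WM r S t U * (if U \<in> Pow (vset n) - {{}, vset n} then 1 else 0))" for t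
  proof -
    have "(\<Sum>U\<in>Pow (vset n). state_dist n WR WM r S t U * (if U \<in> Pow (vset n) - {{}, vset n} then 1 else 0))
       = (\<Sum>U\<in>Pow (vset n). if U \<in> Pow (vset n) - {{}, vset n} then state_dist n WR WM r S t U else 0)"
      by (rule sum.cong) auto
    also have "\<dots> = sum (state_dist n WR WM r S t) (Pow (vset n) \<inter> (Pow (vset n) - {{}, vset n}))"
      by (rule sum.inter_restrict[symmetric]) simp
    also have "Pow (vset n) \<inter> (Pow (vset n) - {{}, vset n}) = Pow (vset n) - {{}, vset n}" by blast
    finally show ?thesis unfolding Abs_def by simp
  qed
  have step: "Phi (Suc t) \<le> Phi t - d * Abs n WR WM r S t" for t
  proof -
    have "Phi (Suc t) = (\<Sum>U\<in>Pow (vset n). state_dist n WR WM r S t U * Exv n WR WM r U phi)"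
      unfolding Phi_def by (rule sd_step)
    also have "\<dots> \<le> (\<Sum>U\<in>Pow (vset n). state_dist n WR WM r S t U * (phi U - d * (if U \<in> Pow (vset n) - {{}, vset n} then 1 else 0)))"
      by (intro sum_mono mult_left_mono drift sdnn)
    also have "\<dots> = Phi t - d * Abs n WR WM r S t"
      unfolding Phi_def A by (simp add: algebra_simps sum_subtractf sum_distrib_left)
    finally show ?thesis .
  qed
  have tel: "d * (\<Sum>t<N. Abs n WR WM r S t) \<le> Phi 0 - Phi N" for N
  proof (induction N)
    case 0 then show ?case by (simp)
  next
    case (Suc N) then show ?case using step[of N] by (simp add: algebra_simps)
  qed
  have pn: "Phi N \<ge> 0" for N unfolding Phi_def
    by (intro sum_nonneg mult_nonneg_nonneg sdnn phinn)
  have p0: "Phi 0 = phi S"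
  proof -
    have "Phi 0 = (\<Sum>T\<in>Pow (vset n). if T = S then phi T else 0)"
      unfolding Phi_def by (rule sum.cong) auto
    then show ?thesis using S by simp
  qed
  show ?thesis using tel[of N] pn[of N] p0 by linarith
qed

lemma restrict_sum: "finite A \<Longrightarrow> B \<subseteq> A \<Longrightarrow> (\<Sum>x\<in>A. if x \<in> B then f x else 0) = sum f B"
proof -
  assume "finite A" "B \<subseteq> A"
  then have "(\<Sum>x\<in>A. if x \<in> B then f x else 0) = sum f (A \<inter> B)" by (simp add: sum.inter_restrict)
  also have "A \<inter> B = B" using \<open>B \<subseteq> A\<close> by blast
  finally show ?thesis .
qed

lemma restrict_sum': "finite A \<Longrightarrow> (\<Sum>x\<in>A. if x \<notin> B then f x else 0) = sum f (A - B)"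
proof -
  assume "finite A"
  then have "(\<Sum>x\<in>A. if x \<notin> B then f x else 0) = (\<Sum>x\<in>A. if x \<in> A - B then f x else 0)"
    by (intro sum.cong) auto
  also have "\<dots> = sum f (A - B)" using \<open>finite A\<close> by (intro restrict_sum) auto
  finally show ?thesis .
qed




definition phi :: "nat \<Rightarrow> nat set \<Rightarrow> real" where "phi n T = real n - real (card T)"

lemma Exv_decomp:
  assumes U: "U \<subseteq> vset n"
  shows "Exv n WR WM r U (phi n) =
     phi n U * (\<Sum>i\<in>vset n. \<Sum>j\<in>vset n. fitness r U i / Ftot n r U * (if i \<in> U then WM i j else WR i j))
     - r / Ftot n r U * (\<Sum>i\<in>U. \<Sum>j\<in>vset n - U. WM i j)
     + 1 / Ftot n r U * (\<Sum>i\<in>vset n - U. \<Sum>j\<in>U. WR i j)"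
proof -
  define a where "a i j = fitness r U i / Ftot n r U * (if i \<in> U then WM i j else WR i j)" for i j
  have fU: "finite U" using U finite_subset fin_vset by blast
  have ph: "phi n (stp U i j) = phi n U - (if i \<in> U \<and> j \<notin> U then 1 else 0)
     + (if i \<notin> U \<and> j \<in> U then 1 else 0)" for i j
  proof (cases "i \<in> U")
    case True
    show ?thesis
    proof (cases "j \<in> U")
      case True
      then have "stp U i j = U" using \<open>i \<in> U\<close> by (simp add: stp_def insert_absorb)
      then show ?thesis using \<open>i \<in> U\<close> True by simp
    next
      case False
      then have "card (insert j U) = card U + 1" using fU by simp
      then show ?thesis using \<open>i \<in> U\<close> False by (simp add: stp_def phi_def)
    qed
  next
    case False
    show ?thesis
    proof (cases "j \<in> U")
      case True
      have "U \<noteq> {}" using True by blast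
      then have c1: "card U \<ge> 1" using fU by (simp add: Suc_le_eq card_gt_0_iff)
      have "card (U - {j}) = card U - 1" using True fU by simp
      then have "real (card (U - {j})) = real (card U) - 1" using c1 by (simp add: of_nat_diff)
      then show ?thesis using False True by (simp add: stp_def phi_def)
    next
      case False
      then have "U - {j} = U" by simp
      then show ?thesis using \<open>i \<notin> U\<close> False by (simp add: stp_def)
    qed
  qed
  have pt: "a i j * phi n (stp U i j) = a i j * phi n U - (if i \<in> U \<and> j \<notin> U then a i j else 0)
     + (if i \<notin> U \<and> j \<in> U then a i j else 0)" for i j
    unfolding ph by (simp add: right_diff_distrib distrib_left)
  have "Exv n WR WM r U (phi n) = (\<Sum>i\<in>vset n. \<Sum>j\<in>vset n. a i j * phi n U - (if i \<in> U \<and> j \<notin> U then a i j else 0)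
     + (if i \<notin> U \<and> j \<in> U then a i j else 0))"
    unfolding Exv_def a_def[symmetric] pt by simp
  also have "\<dots> = phi n U * (\<Sum>i\<in>vset n. \<Sum>j\<in>vset n. a i j)
      - (\<Sum>i\<in>vset n. \<Sum>j\<in>vset n. (if i \<in> U \<and> j \<notin> U then a i j else 0))
      + (\<Sum>i\<in>vset n. \<Sum>j\<in>vset n. (if i \<notin> U \<and> j \<in> U then a i j else 0))"
    by (simp only: sum.distrib sum_subtractf sum_distrib_left[symmetric] sum_distrib_right[symmetric] mult.commute[of _ "phi n U"])
  also have "(\<Sum>i\<in>vset n. \<Sum>j\<in>vset n. (if i \<in> U \<and> j \<notin> U then a i j else 0))
       = (\<Sum>i\<in>vset n. if i \<in> U then (\<Sum>j\<in>vset n. if j \<notin> U then a i j else 0) else 0)"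
    by (intro sum.cong) auto
  also have "\<dots> = (\<Sum>i\<in>U. \<Sum>j\<in>vset n - U. a i j)"
    using U by (simp add: restrict_sum restrict_sum')
  also have "\<dots> = r / Ftot n r U * (\<Sum>i\<in>U. \<Sum>j\<in>vset n - U. WM i j)"
    by (simp add: a_def fitness_def sum_distrib_left)
  also have "(\<Sum>i\<in>vset n. \<Sum>j\<in>vset n. (if i \<notin> U \<and> j \<in> U then a i j else 0))
       = (\<Sum>i\<in>vset n. if i \<notin> U then (\<Sum>j\<in>vset n. if j \<in> U then a i j else 0) else 0)"
    by (intro sum.cong) auto
  also have "\<dots> = (\<Sum>i\<in>vset n - U. \<Sum>j\<in>U. a i j)"
    using U by (simp add: restrict_sum restrict_sum')
  also have "\<dots> = 1 / Ftot n r U * (\<Sum>i\<in>vset n - U. \<Sum>j\<in>U. WR i j)"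
    by (simp add: a_def fitness_def sum_distrib_left)
  finally show ?thesis unfolding a_def .
qed


lemma Ftot_eq:
  assumes U: "U \<subseteq> vset n"
  shows "Ftot n r U = r * card U + (real n - card U)"
proof -
  have fU: "finite U" using U finite_subset fin_vset by blast
  have "Ftot n r U = (\<Sum>x\<in>vset n. if x \<in> U then r else 1)" unfolding Ftot_def fitness_def by simp
  also have "\<dots> = (\<Sum>x\<in>vset n. if x \<in> U then r else 0) + (\<Sum>x\<in>vset n. if x \<notin> U then 1 else 0)"
    by (subst sum.distrib[symmetric]) (intro sum.cong, auto)
  also have "\<dots> = r * card U + card (vset n - U)"
    using U by (simp add: restrict_sum restrict_sum')
  also have "card (vset n - U) = n - card U" using U fU by (simp add: card_Diff_subset vset_def)
  finally show ?thesis using U fU card_mono[OF fin_vset U] by (simp add: vset_def of_nat_diff)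
qed

lemma wM_rows:
  assumes U: "U \<subseteq> vset n" 
  shows "(\<Sum>i\<in>U. \<Sum>j\<in>vset n - U. wM n i j) = real (card U) * (real n - card U) / (real n - 1)"
proof -
  have fU: "finite U" using U finite_subset fin_vset by blast
  have "(\<Sum>i\<in>U. \<Sum>j\<in>vset n - U. wM n i j) = (\<Sum>i\<in>U. \<Sum>j\<in>vset n - U. 1 / (real n - 1))"
    by (intro sum.cong) (auto simp: wM_def)
  also have "\<dots> = real (card U) * (real n - card U) / (real n - 1)"
    using U fU card_mono[OF fin_vset U] by (simp add: card_Diff_subset vset_def of_nat_diff)
  finally show ?thesis .
qed

lemma wM_rowsum: "n \<ge> 2 \<Longrightarrow> i \<in> vset n \<Longrightarrow> (\<Sum>j\<in>vset n. wM n i j) = 1"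
proof -
  assume n: "n \<ge> 2" and i: "i \<in> vset n"
  have "(\<Sum>j\<in>vset n. wM n i j) = (\<Sum>j\<in>vset n - {i}. 1 / (real n - 1))"
    by (rule sum.mono_neutral_cong_right) (auto simp: wM_def)
  also have "\<dots> = 1" using n i by (simp add: vset_def of_nat_diff)
  finally show ?thesis .
qed

lemma wR_nonneg: "wR n E i j \<ge> 0" by (simp add: wR_def)
lemma wM_nonneg: "n \<ge> 2 \<Longrightarrow> wM n i j \<ge> 0" by (simp add: wM_def)

lemma wR_rowsum: "(\<Sum>j\<in>vset n. wR n E i j) \<le> 1"
proof -
  have "(\<Sum>j\<in>vset n. wR n E i j) = (\<Sum>j\<in>vset n. if E i j then 1 / real (deg n E i) else 0)"
    by (simp add: wR_def)
  also have "\<dots> = real (deg n E i) * (1 / real (deg n E i))"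
    by (simp add: sum.If_cases deg_def Int_def)
  also have "\<dots> \<le> 1" by (cases "deg n E i = 0") auto
  finally show ?thesis .
qed




lemma numineq_aux:
  fixes k m c r :: real
  assumes k: "k \<ge> 1" and m: "m \<ge> k" and n: "k + m > 5" and c: "c \<ge> 1"
    and r: "r \<ge> 2 * c * (1 + 2 / (k + m - 5))"
  shows "r * (k - 1) * (m - 1) / (k + m - 1) \<ge> c * (k - 1)"
proof -
  define N where "N = k + m"
  have N5: "N - 5 > 0" using n N_def by simp
  have "2 * c * (1 + 2 / (N - 5)) = 2 * c * (N - 3) / (N - 5)"
    using N5 by (simp add: field_simps)
  with r have r2: "r * (N - 5) \<ge> 2 * c * (N - 3)" using N5 N_def by (simp add: pos_divide_le_eq)
  have m2: "2 * (m - 1) \<ge> N - 2" using m N_def by simp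
  have a1: "r * (N - 5) * (2 * (m - 1)) \<ge> 2 * c * (N - 3) * (2 * (m - 1))"
    by (rule mult_right_mono[OF r2]) (use m k in simp)
  have a2: "2 * c * (N - 3) * (2 * (m - 1)) \<ge> 2 * c * (N - 3) * (N - 2)"
    by (rule mult_left_mono[OF m2]) (use c N5 in simp)
  have "r * (N - 5) * (2 * (m - 1)) \<ge> 2 * c * (N - 3) * (N - 2)" using a1 a2 by linarith
  moreover have "2 * c * (N - 3) * (N - 2) \<ge> 2 * c * (N - 1) * (N - 5)"
  proof -
    have "(N - 3) * (N - 2) \<ge> (N - 1) * (N - 5)" using N5 by (simp add: algebra_simps)
    then show ?thesis using c by (smt (verit) mult.assoc mult_left_mono)
  qed
  ultimately have "(r * (m - 1)) * (N - 5) * 2 \<ge> (c * (N - 1)) * (N - 5) * 2"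
    by (simp add: algebra_simps)
  then have rm: "r * (m - 1) \<ge> c * (N - 1)" using N5 by simp
  have "c * (k - 1) = c * (N - 1) * (k - 1) / (N - 1)" using N5 by simp
  also have "\<dots> \<le> r * (m - 1) * (k - 1) / (N - 1)"
    using rm N5 k by (intro divide_right_mono mult_right_mono) auto
  finally show ?thesis using N_def by (simp add: mult_ac)
qed

lemma numineq:
  fixes k m c r L :: real
  assumes k: "k \<ge> 1" and m: "m \<ge> 1" and n: "k + m > 5" and c: "c \<ge> 1"
    and r: "r \<ge> 2 * c * (1 + 2 / (k + m - 5))"
    and L1: "L \<le> c * k" and L2: "L \<le> m"
  shows "r * k * m / (k + m - 1) - L \<ge> r - c"
proof -
  have N: "k + m - 1 > 0" using n by simp
  have eq: "r * k * m / (k + m - 1) = r + r * (k - 1) * (m - 1) / (k + m - 1)"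
    using N by (simp add: field_simps)
  show ?thesis
  proof (cases "m \<ge> k")
    case True
    from numineq_aux[OF k True n c r] show ?thesis unfolding eq using L1 by (simp add: algebra_simps)
  next
    case False
    have r': "r \<ge> 2 * c * (1 + 2 / (m + k - 5))" using r by (simp add: add.commute)
    from numineq_aux[OF m _ _ c r'] False n have "r * (m - 1) * (k - 1) / (m + k - 1) \<ge> c * (m - 1)" by simp
    then have "r * (k - 1) * (m - 1) / (k + m - 1) \<ge> c * (m - 1)" by (simp add: mult_ac add.commute)
    moreover have "c * m \<ge> m" using c m by simp
    ultimately show ?thesis unfolding eq using L2 by (simp add: algebra_simps)
  qed
qed




context
  fixes n :: nat and E :: "nat \<Rightarrow> nat \<Rightarrow> bool" and c :: real
  assumes n5: "n > 5"
    and ug: "undirected_graph_on n E"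
    and conn: "connected_graph n E"
    and ratio: "\<forall>x y. E x y \<longrightarrow> wR n E x y / wR n E y x \<le> c"
begin

lemma deg_pos: "E x y \<Longrightarrow> deg n E x > 0"
proof -
  assume "E x y"
  then have "y \<in> {y \<in> vset n. E x y}" using ug unfolding undirected_graph_on_def by auto
  moreover have "finite {y \<in> vset n. E x y}" by simp
  ultimately show ?thesis unfolding deg_def using card_gt_0_iff by blast
qed

lemma c_ge1: "c \<ge> 1"
proof -
  have "0 \<in> vset n" "1 \<in> vset n" using n5 by (auto simp: vset_def)
  then have "E\<^sup>*\<^sup>* 0 1" using conn unfolding connected_graph_def by blast
  then obtain y where "E 0 y" by (metis converse_rtranclpE zero_neq_one)
  then have e1: "E 0 y" and e2: "E y 0" using ug unfolding undirected_graph_on_def by auto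
  have p1: "deg n E 0 > 0" using deg_pos e1 by blast
  have p2: "deg n E y > 0" using deg_pos e2 by blast
  have "wR n E 0 y / wR n E y 0 \<le> c" using ratio e1 by blast
  then have "real (deg n E y) / real (deg n E 0) \<le> c"
    using e1 e2 p1 p2 by (simp add: wR_def)
  moreover have "wR n E y 0 / wR n E 0 y \<le> c" using ratio e2 by blast
  then have "real (deg n E 0) / real (deg n E y) \<le> c"
    using e1 e2 p1 p2 by (simp add: wR_def)
  ultimately show ?thesis using p1 p2
  proof (cases "deg n E y \<ge> deg n E 0")
    case True
    then have "1 \<le> real (deg n E y) / real (deg n E 0)" using p1 by (simp add: le_divide_eq)
    then show ?thesis using \<open>real (deg n E y) / real (deg n E 0) \<le> c\<close> by linarith
  next
    case False
    then have "1 \<le> real (deg n E 0) / real (deg n E y)" using p2 by (simp add: le_divide_eq)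
    then show ?thesis using \<open>real (deg n E 0) / real (deg n E y) \<le> c\<close> by linarith
  qed
qed

lemma wR_le: "wR n E i j \<le> c * wR n E j i"
proof (cases "E i j")
  case True
  then have "E j i" using ug unfolding undirected_graph_on_def by auto
  then have pos: "wR n E j i > 0" using deg_pos by (auto simp: wR_def)
  have "wR n E i j / wR n E j i \<le> c" using ratio True by auto
  then show ?thesis using pos by (simp add: divide_le_eq)
next
  case False
  then show ?thesis using c_ge1 by (simp add: wR_def wR_nonneg)
qed

lemma L_le_m:
  assumes U: "U \<subseteq> vset n"
  shows "(\<Sum>i\<in>vset n - U. \<Sum>j\<in>U. wR n E i j) \<le> real n - card U"
proof -
  have "(\<Sum>i\<in>vset n - U. \<Sum>j\<in>U. wR n E i j) \<le> (\<Sum>i\<in>vset n - U. \<Sum>j\<in>vset n. wR n E i j)"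
    using U by (intro sum_mono sum_mono2) (auto simp: wR_nonneg)
  also have "\<dots> \<le> (\<Sum>i\<in>vset n - U. 1)" by (intro sum_mono wR_rowsum)
  also have "\<dots> = real n - card U"
    using U card_mono[OF fin_vset U] by (simp add: card_Diff_subset vset_def of_nat_diff finite_subset)
  finally show ?thesis .
qed

lemma L_le_ck:
  assumes U: "U \<subseteq> vset n"
  shows "(\<Sum>i\<in>vset n - U. \<Sum>j\<in>U. wR n E i j) \<le> c * card U"
proof -
  have fU: "finite U" using U finite_subset fin_vset by blast
  have "(\<Sum>i\<in>vset n - U. \<Sum>j\<in>U. wR n E i j) \<le> (\<Sum>i\<in>vset n - U. \<Sum>j\<in>U. c * wR n E j i)"
    by (intro sum_mono wR_le)
  also have "\<dots> = c * (\<Sum>j\<in>U. \<Sum>i\<in>vset n - U. wR n E j i)"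
    by (subst sum.swap) (simp add: sum_distrib_left)
  also have "\<dots> \<le> c * (\<Sum>j\<in>U. \<Sum>i\<in>vset n. wR n E j i)"
    using c_ge1 by (intro mult_left_mono sum_mono sum_mono2) (auto simp: wR_nonneg)
  also have "\<dots> \<le> c * (\<Sum>j\<in>U. 1)"
    using c_ge1 by (intro mult_left_mono sum_mono wR_rowsum) auto
  finally show ?thesis by simp
qed

end



lemma Wt_le1:
  assumes U: "U \<subseteq> vset n" and r: "r > 0" and n: "n \<ge> 2"
  shows "(\<Sum>i\<in>vset n. \<Sum>j\<in>vset n. fitness r U i / Ftot n r U * (if i \<in> U then wM n i j else wR n E i j)) \<le> 1"
proof -
  have z: "0 \<in> vset n" using n by (simp add: vset_def)
  have Fpos: "Ftot n r U > 0" unfolding Ftot_def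
    by (rule sum_pos) (use z r in \<open>auto simp: fitness_def\<close>)
  have "(\<Sum>i\<in>vset n. \<Sum>j\<in>vset n. fitness r U i / Ftot n r U * (if i \<in> U then wM n i j else wR n E i j))
     = (\<Sum>i\<in>vset n. fitness r U i / Ftot n r U * (\<Sum>j\<in>vset n. (if i \<in> U then wM n i j else wR n E i j)))"
    by (simp add: sum_distrib_left)
  also have "\<dots> \<le> (\<Sum>i\<in>vset n. fitness r U i / Ftot n r U * 1)"
  proof (intro sum_mono mult_left_mono)
    fix i assume i: "i \<in> vset n"
    show "(\<Sum>j\<in>vset n. (if i \<in> U then wM n i j else wR n E i j)) \<le> 1"
      using wM_rowsum[OF n i] wR_rowsum[of n E i] by (cases "i \<in> U") auto
    show "0 \<le> fitness r U i / Ftot n r U" using Fpos r by (auto simp: fitness_def)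
  qed
  also have "\<dots> = 1" using Fpos by (simp add: sum_divide_distrib[symmetric] Ftot_def)
  finally show ?thesis .
qed

context
  fixes n :: nat and E :: "nat \<Rightarrow> nat \<Rightarrow> bool" and c r :: real
  assumes n5: "n > 5"
    and ug: "undirected_graph_on n E"
    and conn: "connected_graph n E"
    and ratio: "\<forall>x y. E x y \<longrightarrow> wR n E x y / wR n E y x \<le> c"
    and rbig: "r \<ge> 2 * c * (1 + 2 / (real n - 5))"
begin

lemma c1: "c \<ge> 1" using c_ge1[OF n5 ug conn ratio] .

lemma r_gt: "r > c" "r \<ge> 1"
proof -
  have "2 / (real n - 5) > 0" using n5 by simp
  then have "2 * c * (1 + 2 / (real n - 5)) > 2 * c" using c1 by simp
  then show "r > c" "r \<ge> 1" using rbig c1 by linarith+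
qed

lemma drift:
  assumes U: "U \<in> Pow (vset n)"
  shows "Exv n (wR n E) (wM n) r U (phi n) \<le> phi n U - (r - c) / (r * n) * (if U \<in> Pow (vset n) - {{}, vset n} then 1 else 0)"
proof -
  have U': "U \<subseteq> vset n" using U by simp
  have fU: "finite U" using U' finite_subset fin_vset by blast
  have kn: "card U \<le> n" using card_mono[OF fin_vset U'] by (simp add: vset_def)
  have r0: "r > 0" using r_gt c1 by linarith
  define F where "F = Ftot n r U"
  have Feq: "F = r * card U + (real n - card U)" unfolding F_def by (rule Ftot_eq[OF U'])
  have "1 * real (card U) \<le> r * real (card U)" by (rule mult_right_mono[OF r_gt(2)]) simp
  then have Fpos: "F > 0" using Feq kn n5 by simp
  define G where "G = (\<Sum>i\<in>U. \<Sum>j\<in>vset n - U. wM n i j)"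
  define L where "L = (\<Sum>i\<in>vset n - U. \<Sum>j\<in>U. wR n E i j)"
  define Wt where "Wt = (\<Sum>i\<in>vset n. \<Sum>j\<in>vset n. fitness r U i / Ftot n r U * (if i \<in> U then wM n i j else wR n E i j))"
  have dec: "Exv n (wR n E) (wM n) r U (phi n) = phi n U * Wt - r / F * G + 1 / F * L"
    unfolding F_def G_def L_def Wt_def by (rule Exv_decomp[OF U'])
  have Wt1: "Wt \<le> 1" unfolding Wt_def using Wt_le1[OF U' r0] n5 by simp
  have phinn: "phi n U \<ge> 0" using kn by (simp add: phi_def)
  have main: "phi n U * Wt \<le> phi n U" using Wt1 phinn by (simp add: mult_left_le)
  show ?thesis
  proof (cases "U \<in> Pow (vset n) - {{}, vset n}")
    case False
    then have "U = {} \<or> U = vset n" using U by blast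
    then have "G = 0 \<and> L = 0" unfolding G_def L_def by auto
    moreover have "(if U \<in> Pow (vset n) - {{}, vset n} then 1 else 0) = (0::real)" using False by simp
    ultimately show ?thesis using dec main by simp
  next
    case True
    define K where "K = real (card U)"
    define M where "M = real n - K"
    have "U \<noteq> {}" using True by blast
    then have "card U > 0" using fU card_gt_0_iff by blast
    then have K1: "K \<ge> 1" unfolding K_def by simp
    have "card U \<noteq> n"
    proof
      assume "card U = n"
      then have "U = vset n" using card_subset_eq[OF fin_vset U'] by (simp add: vset_def)
      then show False using True by blast
    qed
    then have M1: "M \<ge> 1" using kn unfolding M_def K_def by linarith
    have KM: "K + M = real n" unfolding M_def by simp
    have Gv: "G = K * M / (K + M - 1)" unfolding G_def K_def M_def using wM_rows[OF U'] by simp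
    have Lm: "L \<le> M" unfolding L_def M_def K_def using L_le_m[OF n5 ug conn ratio U'] .
    have Lc: "L \<le> c * K" unfolding L_def K_def using L_le_ck[OF n5 ug conn ratio U'] .
    have ineq: "r * K * M / (K + M - 1) - L \<ge> r - c"
      by (rule numineq[OF K1 M1 _ c1 _ Lc Lm]) (use KM n5 rbig in auto)
    have "1 * M \<le> r * M" by (rule mult_right_mono[OF r_gt(2)]) (use M1 in simp)
    then have FF: "F \<le> r * n" using Feq unfolding K_def M_def by (simp add: algebra_simps)
    have "r / F * G - 1 / F * L = (r * K * M / (K + M - 1) - L) / F"
    proof -
      have den: "K + M - 1 > 0" using K1 M1 by simp
      have "(r * K * M / (K + M - 1) - L) / F = (r * K * M / (K + M - 1)) / F - L / F"
        by (rule diff_divide_distrib)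
      then show ?thesis unfolding Gv by (simp add: mult.assoc)
    qed
    also have "\<dots> \<ge> (r - c) / F" using ineq Fpos by (simp add: divide_right_mono)
    finally have "r / F * G - 1 / F * L \<ge> (r - c) / F" .
    moreover have "(r - c) / F \<ge> (r - c) / (r * n)"
      using FF Fpos r_gt by (intro divide_left_mono) auto
    ultimately show ?thesis using dec main True by simp
  qed
qed

end



theorem theorem9:
  fixes n :: nat and E :: "nat \<Rightarrow> nat \<Rightarrow> bool" and c r :: real
  assumes "n > 5"
    and "undirected_graph_on n E"
    and "connected_graph n E"
    and "\<forall>x y. E x y \<longrightarrow> wR n E x y / wR n E y x \<le> c"
    and "r \<ge> 2 * c * (1 + 2 / (real n - 5))"
  shows "(\<forall>S \<subseteq> vset n. exp_abs_time n (wR n E) (wM n) r S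
            \<le> ennreal (r / (r - c) * real n * (real n - real (card S))))
         \<and> exp_abs_time_uniform n (wR n E) (wM n) r \<le> ennreal (r / (r - c) * (real n)^2)"
proof -
  note A = assms
  have c1: "c \<ge> 1" using c1[OF A] .
  have rc: "r > c" "r \<ge> 1" using r_gt[OF A] by auto
  have r0: "r > 0" using rc by linarith
  have n2: "n \<ge> 2" using A(1) by simp
  have sdnn: "state_dist n (wR n E) (wM n) r S t T \<ge> 0" for S t T
    by (rule sd_nonneg[OF r0 wR_nonneg wM_nonneg[OF n2]])
  define d where "d = (r - c) / (r * n)"
  have dpos: "d > 0" unfolding d_def using rc A(1) by simp
  have one: "exp_abs_time n (wR n E) (wM n) r S \<le> ennreal (r / (r - c) * real n * (real n - real (card S)))"
    if S: "S \<subseteq> vset n" for S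
  proof -
    have kn: "card S \<le> n" using card_mono[OF fin_vset S] by (simp add: vset_def)
    have tel: "d * (\<Sum>t<N. Abs n (wR n E) (wM n) r S t) \<le> phi n S" for N
    proof (rule telescope[OF sdnn])
      show "\<And>T. T \<in> Pow (vset n) \<Longrightarrow> 0 \<le> phi n T"
        using card_mono[OF fin_vset] by (auto simp: phi_def vset_def)
      show "\<And>U. U \<in> Pow (vset n) \<Longrightarrow> Exv n (wR n E) (wM n) r U (phi n)
        \<le> phi n U - d * (if U \<in> Pow (vset n) - {{}, vset n} then 1 else 0)"
        unfolding d_def by (rule drift[OF A])
    qed (rule S)
    have eqB: "phi n S / d = r / (r - c) * real n * (real n - real (card S))"
      unfolding d_def phi_def using rc A(1) by (simp add: field_simps)
    have bnd: "(\<Sum>t<N. Abs n (wR n E) (wM n) r S t) \<le> r / (r - c) * real n * (real n - real (card S))" for N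
    proof -
      have "(\<Sum>t<N. Abs n (wR n E) (wM n) r S t) \<le> phi n S / d"
        using tel[of N] dpos by (simp add: le_divide_eq mult.commute)
      then show ?thesis using eqB by simp
    qed
    have Anonneg: "Abs n (wR n E) (wM n) r S t \<ge> 0" for t
      unfolding Abs_def by (intro sum_nonneg sdnn)
    have "exp_abs_time n (wR n E) (wM n) r S = (\<Sum>t. ennreal (Abs n (wR n E) (wM n) r S t))"
      unfolding exp_abs_time_def Abs_def ..
    also have "\<dots> \<le> ennreal (r / (r - c) * real n * (real n - real (card S)))"
    proof (rule suminf_le_const[OF summableI])
      fix N
      have "(\<Sum>t<N. ennreal (Abs n (wR n E) (wM n) r S t)) = ennreal (\<Sum>t<N. Abs n (wR n E) (wM n) r S t)"
        using Anonneg by simp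
      also have "\<dots> \<le> ennreal (r / (r - c) * real n * (real n - real (card S)))"
        by (rule ennreal_leI[OF bnd])
      finally show "(\<Sum>t<N. ennreal (Abs n (wR n E) (wM n) r S t)) \<le> ennreal (r / (r - c) * real n * (real n - real (card S)))" .
    qed
    finally show ?thesis .
  qed
  define B where "B = r / (r - c) * (real n)^2"
  have Bnn: "B \<ge> 0" unfolding B_def using rc by simp
  have "(\<Sum>v\<in>vset n. exp_abs_time n (wR n E) (wM n) r {v}) \<le> (\<Sum>v\<in>vset n. ennreal B)"
  proof (rule sum_mono)
    fix v assume "v \<in> vset n"
    then have "exp_abs_time n (wR n E) (wM n) r {v} \<le> ennreal (r / (r - c) * real n * (real n - 1))"
      using one[of "{v}"] by simp
    also have "\<dots> \<le> ennreal B"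
    proof (rule ennreal_leI)
      have "r * real n * (real n - 1) \<le> r * real n * real n"
        by (rule mult_left_mono) (use rc in auto)
      then have "r * real n * (real n - 1) / (r - c) \<le> r * real n * real n / (r - c)"
        by (rule divide_right_mono) (use rc in simp)
      then show "r / (r - c) * real n * (real n - 1) \<le> B" unfolding B_def by (simp add: power2_eq_square)
    qed
    finally show "exp_abs_time n (wR n E) (wM n) r {v} \<le> ennreal B" .
  qed
  also have "\<dots> = ennreal (real n) * ennreal B"
    by (simp add: vset_def ennreal_of_nat_eq_real_of_nat)
  finally have sb: "(\<Sum>v\<in>vset n. exp_abs_time n (wR n E) (wM n) r {v}) \<le> ennreal (real n) * ennreal B" .
  have "exp_abs_time_uniform n (wR n E) (wM n) r \<le> ennreal B"
    unfolding exp_abs_time_uniform_def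
    by (rule divide_le_posI_ennreal[OF _ sb]) (use A(1) in simp)
  then show ?thesis using one unfolding B_def by blast
qed


end
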